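(* Let $\mathbb{N}_\vee$ be the semigroup $\mathbb{N}$ with operation $m\vee n=\max\{m,n\}$, and for $n\in\mathbb{N}\cup\{\infty\}$ let $\phi_n\in\Delta(\ell^1(\mathbb{N}_\vee))$ be $\phi_n(\sum_i\alpha_i\delta_i)=\sum_{i=1}^n\alpha_i$. Then $\ell^1(\mathbb{N}_\vee)$ is approximately left character biprojective (in particular approximately left $\phi_\infty$-biprojective), but $\ell^1(\mathbb{N}_\vee)$ is not $\phi_\infty$-biprojective.
   Context: The characters of $\ell^1(\mathbb{N}_\vee)$ are exactly the $\phi_n$, $n\in\mathbb{N}\cup\{\infty\}$. For a Banach algebra $A$, $A\otimes_pA$ is the projective tensor product with $a\cdot(b\otimes c)=ab\otimes c$, $(b\otimes c)\cdot a=b\otimes ca$, $\pi_A(a\otimes b)=ab$. For a character $\phi$, $A$ is $\phi$-biprojective if there is a bounded $A$-bimodule morphism $\rho:A\to A\otimes_pA$ with $\phi(\pi_A(\rho(a)))=\phi(a)$ for all $a\in A$. $A$ is approximately left $\phi$-biprojective if there is a net $(\rho_\alpha)$ of bounded linear maps $A\to A\otimes_pA$ such that for all $a,x\in A$: $\|a\cdot\rho_\alpha(x)-\rho_\alpha(ax)\|\to0$, $\|\rho_\alpha(xa)-\phi(a)\rho_\alpha(x)\|\to0$, $\phi(\pi_A(\rho_\alpha(x)))-\phi(x)\to0$; approximately left character biprojective means this holds for every character. *)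

theory Defs
  imports "HOL-Analysis.Analysis"
begin

text \<open>
  The semigroup N_v = ({1,2,3,...}, max) is modelled on the type nat via the
  order isomorphism i \<mapsto> i+1; so index i :: nat stands for the paper's i+1.
  Elements of l^1(N_v) are absolutely summable functions nat \<Rightarrow> complex.
  The projective tensor product l^1(N_v) \<otimes>_p l^1(N_v) is modelled by its standard
  isometric realisation l^1(N_v \<times> N_v), with b \<otimes> c \<mapsto> (\<lambda>(i,j). b i * c j).
\<close>

definition l1 :: "(nat \<Rightarrow> complex) set" where
  "l1 = {f. (\<lambda>n. cmod (f n)) summable_on UNIV}"

definition l1norm :: "(nat \<Rightarrow> complex) \<Rightarrow> real" where
  "l1norm f = (\<Sum>\<^sub>\<infinity>n. cmod (f n))"

definition l1T :: "(nat \<times> nat \<Rightarrow> complex) set" where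
  "l1T = {F. (\<lambda>p. cmod (F p)) summable_on UNIV}"

definition l1Tnorm :: "(nat \<times> nat \<Rightarrow> complex) \<Rightarrow> real" where
  "l1Tnorm F = (\<Sum>\<^sub>\<infinity>p. cmod (F p))"

definition maxpairs :: "nat \<Rightarrow> (nat \<times> nat) set" where
  "maxpairs k = {(i, j). i \<le> k \<and> j \<le> k \<and> max i j = k}"

definition conv :: "(nat \<Rightarrow> complex) \<Rightarrow> (nat \<Rightarrow> complex) \<Rightarrow> nat \<Rightarrow> complex" where
  "conv f g k = (\<Sum>(i, j)\<in>maxpairs k. f i * g j)"

text \<open>Left module action a\<cdot>(b\<otimes>c) = ab\<otimes>c.\<close>
definition lact :: "(nat \<Rightarrow> complex) \<Rightarrow> (nat \<times> nat \<Rightarrow> complex) \<Rightarrow> nat \<times> nat \<Rightarrow> complex" where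
  "lact a F = (\<lambda>(k, l). \<Sum>(i, j)\<in>maxpairs k. a i * F (j, l))"

text \<open>Right module action (b\<otimes>c)\<cdot>a = b\<otimes>ca.\<close>
definition ract :: "(nat \<times> nat \<Rightarrow> complex) \<Rightarrow> (nat \<Rightarrow> complex) \<Rightarrow> nat \<times> nat \<Rightarrow> complex" where
  "ract F a = (\<lambda>(k, l). \<Sum>(j, i)\<in>maxpairs l. F (k, j) * a i)"

text \<open>Product map pi(b\<otimes>c) = bc.\<close>
definition piA :: "(nat \<times> nat \<Rightarrow> complex) \<Rightarrow> nat \<Rightarrow> complex" where
  "piA F k = (\<Sum>(i, j)\<in>maxpairs k. F (i, j))"

text \<open>phi_n for n \<in> N \<union> {\<infinity>}: Some n (n \<ge> 1) is phi_n, None is phi_\<infinity>.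
  phi_n(f) = sum of the first n coefficients (paper indices 1..n = our 0..n-1).\<close>
definition phi :: "nat option \<Rightarrow> (nat \<Rightarrow> complex) \<Rightarrow> complex" where
  "phi n f = (case n of Some m \<Rightarrow> (\<Sum>i<m. f i) | None \<Rightarrow> (\<Sum>\<^sub>\<infinity>i. f i))"

definition character :: "((nat \<Rightarrow> complex) \<Rightarrow> complex) \<Rightarrow> bool" where
  "character \<phi> \<longleftrightarrow>
     (\<forall>f\<in>l1. \<forall>g\<in>l1. \<phi> (\<lambda>n. f n + g n) = \<phi> f + \<phi> g) \<and>
     (\<forall>c. \<forall>f\<in>l1. \<phi> (\<lambda>n. c * f n) = c * \<phi> f) \<and>
     (\<forall>f\<in>l1. \<forall>g\<in>l1. \<phi> (conv f g) = \<phi> f * \<phi> g) \<and>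
     (\<exists>f\<in>l1. \<phi> f \<noteq> 0)"

definition bdd_lin :: "((nat \<Rightarrow> complex) \<Rightarrow> (nat \<times> nat \<Rightarrow> complex)) \<Rightarrow> bool" where
  "bdd_lin \<rho> \<longleftrightarrow>
     (\<forall>f\<in>l1. \<rho> f \<in> l1T) \<and>
     (\<forall>f\<in>l1. \<forall>g\<in>l1. \<rho> (\<lambda>n. f n + g n) = (\<lambda>p. \<rho> f p + \<rho> g p)) \<and>
     (\<forall>c. \<forall>f\<in>l1. \<rho> (\<lambda>n. c * f n) = (\<lambda>p. c * \<rho> f p)) \<and>
     (\<exists>C. \<forall>f\<in>l1. l1Tnorm (\<rho> f) \<le> C * l1norm f)"

definition phi_biprojective :: "((nat \<Rightarrow> complex) \<Rightarrow> complex) \<Rightarrow> bool" where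
  "phi_biprojective \<phi> \<longleftrightarrow>
     (\<exists>\<rho>. bdd_lin \<rho> \<and>
        (\<forall>a\<in>l1. \<forall>x\<in>l1. \<rho> (conv a x) = lact a (\<rho> x) \<and> \<rho> (conv x a) = ract (\<rho> x) a) \<and>
        (\<forall>a\<in>l1. \<phi> (piA (\<rho> a)) = \<phi> a))"

text \<open>A net of maps is encoded as a proper filter on the space of maps
  (the image filter of the net); the net consists of bounded linear maps.\<close>
definition approx_left_phi_biprojective :: "((nat \<Rightarrow> complex) \<Rightarrow> complex) \<Rightarrow> bool" where
  "approx_left_phi_biprojective \<phi> \<longleftrightarrow>
     (\<exists>F :: ((nat \<Rightarrow> complex) \<Rightarrow> (nat \<times> nat \<Rightarrow> complex)) filter.
        F \<noteq> bot \<and> eventually bdd_lin F \<and>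
        (\<forall>a\<in>l1. \<forall>x\<in>l1.
           ((\<lambda>\<rho>. l1Tnorm (\<lambda>p. lact a (\<rho> x) p - \<rho> (conv a x) p)) \<longlongrightarrow> 0) F \<and>
           ((\<lambda>\<rho>. l1Tnorm (\<lambda>p. \<rho> (conv x a) p - \<phi> a * \<rho> x p)) \<longlongrightarrow> 0) F \<and>
           ((\<lambda>\<rho>. \<phi> (piA (\<rho> x)) - \<phi> x) \<longlongrightarrow> 0) F))"

definition approx_left_character_biprojective :: bool where
  "approx_left_character_biprojective \<longleftrightarrow>
     (\<forall>\<phi>. character \<phi> \<longrightarrow> approx_left_phi_biprojective \<phi>)"

end

theory Submission
  imports Defs
begin

definition ps :: "(nat \<Rightarrow> 'a::comm_monoid_add) \<Rightarrow> nat \<Rightarrow> 'a" where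
  "ps f K = (\<Sum>i\<le>K. f i)"

definition dl :: "nat \<Rightarrow> nat \<Rightarrow> complex" where
  "dl i = (\<lambda>n. if n = i then 1 else 0)"

definition tens :: "(nat \<Rightarrow> complex) \<Rightarrow> (nat \<Rightarrow> complex) \<Rightarrow> nat \<times> nat \<Rightarrow> complex" where
  "tens X Y = (\<lambda>(k, l). X k * Y l)"

lemma maxpairs_split: "maxpairs k = ({k} \<times> {..k}) \<union> ({..<k} \<times> {k})"
  unfolding maxpairs_def by auto

lemma finite_maxpairs[simp]: "finite (maxpairs k)"
  unfolding maxpairs_split by auto

lemma sum_maxpairs: "(\<Sum>p\<in>maxpairs k. H p) = (\<Sum>j\<le>k. H (k, j)) + (\<Sum>i<k. H (i, k))"
proof -
  have "(\<Sum>p\<in>maxpairs k. H p) = (\<Sum>p\<in>{k} \<times> {..k}. H p) + (\<Sum>p\<in>{..<k} \<times> {k}. H p)"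
    unfolding maxpairs_split by (rule sum.union_disjoint) auto
  also have "{k} \<times> {..k} = (\<lambda>j. (k, j)) ` {..k}" by auto
  hence "(\<Sum>p\<in>{k} \<times> {..k}. H p) = (\<Sum>j\<le>k. H (k, j))"
    by (simp add: sum.reindex inj_on_def)
  moreover have "{..<k} \<times> {k} = (\<lambda>i. (i, k)) ` {..<k}" by auto
  hence "(\<Sum>p\<in>{..<k} \<times> {k}. H p) = (\<Sum>i<k. H (i, k))"
    by (simp add: sum.reindex inj_on_def)
  ultimately show ?thesis by simp
qed

lemma sum_group_sq: "(\<Sum>k\<le>K. \<Sum>p\<in>maxpairs k. H p) = (\<Sum>p\<in>{..K} \<times> {..K}. H p)"
proof -
  have eq: "{..K} \<times> {..K} = (\<Union>k\<in>{..K}. maxpairs k)"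
    unfolding maxpairs_def by auto
  show ?thesis unfolding eq
    apply (rule sum.UNION_disjoint[symmetric])
      apply simp apply simp by (auto simp: maxpairs_def)
qed

lemma ps_conv: "ps (conv f g) K = ps f K * ps g K"
  unfolding ps_def conv_def
  by (simp add: sum_group_sq sum_product sum.cartesian_product case_prod_beta)

lemma ps_inj:
  fixes f g :: "nat \<Rightarrow> complex"
  assumes "\<And>K. ps f K = ps g K" shows "f = g"
proof
  fix k show "f k = g k"
  proof (cases k)
    case 0 then show ?thesis using assms[of 0] by (simp add: ps_def)
  next
    case (Suc m)
    have "f k = ps f k - ps f m" "g k = ps g k - ps g m" using Suc by (simp_all add: ps_def)
    then show ?thesis using assms by simp
  qed
qed

lemma ps_dl: "ps (dl i) K = (if i \<le> K then 1 else 0)"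
  unfolding ps_def dl_def by auto

lemma ps_lin: "ps (\<lambda>n. f n + c * g n) K = ps f K + c * ps (g::nat\<Rightarrow>complex) K"
  unfolding ps_def by (simp add: sum.distrib sum_distrib_left)
lemma ps_add: "ps (\<lambda>n. f n + g n) K = ps f K + ps g K"
  unfolding ps_def by (simp add: sum.distrib)
lemma ps_diff: "ps (\<lambda>n. f n - g n) K = ps f K - ps (g::nat\<Rightarrow>complex) K"
  unfolding ps_def by (simp add: sum_subtractf)
lemma ps_mult: "ps (\<lambda>n. c * f n) K = c * ps (f::nat\<Rightarrow>complex) K"
  unfolding ps_def by (simp add: sum_distrib_left)

lemma conv_assoc: "conv a (conv x e) = conv (conv a x) e"
  by (rule ps_inj) (simp add: ps_conv mult.assoc)
lemma conv_comm: "conv a x = conv x a"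
  by (rule ps_inj) (simp add: ps_conv mult.commute)
lemma conv_unit: "conv x (dl 0) = x"
  by (rule ps_inj) (simp add: ps_conv ps_dl)
lemma conv_dl: "conv (dl i) (dl j) = dl (max i j)"
  by (rule ps_inj) (simp add: ps_conv ps_dl)

lemma conv_add: "conv (\<lambda>n. f n + g n) e = (\<lambda>k. conv f e k + conv g e k)"
  unfolding conv_def by (simp add: case_prod_beta ring_distribs sum.distrib)
lemma conv_smult: "conv (\<lambda>n. c * f n) e = (\<lambda>k. c * conv f e k)"
  unfolding conv_def by (simp add: case_prod_beta sum_distrib_left mult.assoc)

lemma lact_tens: "lact a (tens X Y) = tens (conv a X) Y"
  unfolding lact_def tens_def conv_def
  by (auto simp: case_prod_beta sum_distrib_right mult.assoc intro!: ext)

lemma piA_tens: "piA (tens X Y) = conv X Y"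
  unfolding piA_def tens_def conv_def by (auto simp: case_prod_beta intro!: ext)

lemma l1_bound:
  fixes h :: "nat \<Rightarrow> complex"
  assumes "\<And>K. (\<Sum>k\<le>K. cmod (h k)) \<le> B"
  shows "h \<in> l1" "l1norm h \<le> B"
proof -
  have fin: "sum (\<lambda>k. cmod (h k)) F \<le> B" if "finite F" for F
  proof (cases "F = {}")
    case True then show ?thesis using assms[of 0] by (simp add: order_trans[OF _ assms[of 0]])
  next
    case False
    have "F \<subseteq> {..Max F}" using that by auto
    then have "sum (\<lambda>k. cmod (h k)) F \<le> (\<Sum>k\<le>Max F. cmod (h k))"
      by (intro sum_mono2) auto
    then show ?thesis using assms[of "Max F"] by linarith
  qed
  have s: "(\<lambda>k. cmod (h k)) summable_on UNIV"
    by (rule nonneg_bdd_above_summable_on) (auto intro!: bdd_aboveI[where M=B] fin)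
  then show "h \<in> l1" unfolding l1_def by simp
  show "l1norm h \<le> B" unfolding l1norm_def
    by (rule infsum_le_finite_sums[OF s]) (use fin in auto)
qed

lemma l1T_bound:
  fixes h :: "nat \<times> nat \<Rightarrow> complex"
  assumes "\<And>K. (\<Sum>p\<in>{..K}\<times>{..K}. cmod (h p)) \<le> B"
  shows "h \<in> l1T" "l1Tnorm h \<le> B"
proof -
  have fin: "sum (\<lambda>k. cmod (h k)) F \<le> B" if "finite F" for F
  proof -
    define M where "M = Max (fst ` F \<union> snd ` F \<union> {0})"
    have "F \<subseteq> {..M}\<times>{..M}" unfolding M_def using that
      by (force intro: Max_ge)
    then have "sum (\<lambda>k. cmod (h k)) F \<le> (\<Sum>p\<in>{..M}\<times>{..M}. cmod (h p))"
      by (intro sum_mono2) auto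
    then show ?thesis using assms[of M] by linarith
  qed
  have s: "(\<lambda>k. cmod (h k)) summable_on UNIV"
    by (rule nonneg_bdd_above_summable_on) (auto intro!: bdd_aboveI[where M=B] fin)
  then show "h \<in> l1T" unfolding l1T_def by simp
  show "l1Tnorm h \<le> B" unfolding l1Tnorm_def
    by (rule infsum_le_finite_sums[OF s]) (use fin in auto)
qed

lemma l1_ps_le: "f \<in> l1 \<Longrightarrow> (\<Sum>k\<le>K. cmod (f k)) \<le> l1norm f"
  unfolding l1_def l1norm_def by (rule finite_sum_le_infsum) auto

lemma l1norm_nonneg: "0 \<le> l1norm f"
  unfolding l1norm_def by (rule infsum_nonneg) auto
lemma l1Tnorm_nonneg: "0 \<le> l1Tnorm f"
  unfolding l1Tnorm_def by (rule infsum_nonneg) auto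

lemma l1_lin:
  assumes "f \<in> l1" "g \<in> l1"
  shows "(\<lambda>n. f n + c * g n) \<in> l1"
proof (rule l1_bound(1))
  fix K
  have "(\<Sum>k\<le>K. cmod (f k + c * g k)) \<le> (\<Sum>k\<le>K. cmod (f k) + cmod c * cmod (g k))"
    by (intro sum_mono) (metis norm_mult norm_triangle_ineq)
  also have "\<dots> = (\<Sum>k\<le>K. cmod (f k)) + cmod c * (\<Sum>k\<le>K. cmod (g k))"
    by (simp add: sum.distrib sum_distrib_left)
  also have "\<dots> \<le> l1norm f + cmod c * l1norm g"
    using l1_ps_le[OF assms(1), of K] l1_ps_le[OF assms(2), of K]
    by (intro add_mono mult_left_mono) auto
  finally show "(\<Sum>k\<le>K. cmod (f k + c * g k)) \<le> l1norm f + cmod c * l1norm g" .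
qed

lemma l1_add: "f \<in> l1 \<Longrightarrow> g \<in> l1 \<Longrightarrow> (\<lambda>n. f n + g n) \<in> l1"
  using l1_lin[of f g 1] by simp
lemma l1_diff: "f \<in> l1 \<Longrightarrow> g \<in> l1 \<Longrightarrow> (\<lambda>n. f n - g n) \<in> l1"
  using l1_lin[of f g "-1"] by simp
lemma l1_zero: "(\<lambda>n. 0) \<in> l1"
  by (rule l1_bound(1)[of _ 0]) simp
lemma l1_mult: "g \<in> l1 \<Longrightarrow> (\<lambda>n. c * g n) \<in> l1"
  using l1_lin[OF l1_zero, of g c] by simp

lemma dl_l1: "dl i \<in> l1" and dl_norm: "l1norm (dl i) \<le> 1"
proof -
  have "(\<Sum>k\<le>K. cmod (dl i k)) \<le> 1" for K
    unfolding dl_def by (cases "i \<le> K") (auto simp: if_distrib sum.If_cases)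
  then show "dl i \<in> l1" "l1norm (dl i) \<le> 1" using l1_bound by blast+
qed

lemma conv_l1:
  assumes "f \<in> l1" "g \<in> l1"
  shows "conv f g \<in> l1" "l1norm (conv f g) \<le> l1norm f * l1norm g"
proof -
  have "(\<Sum>k\<le>K. cmod (conv f g k)) \<le> l1norm f * l1norm g" for K
  proof -
    have "(\<Sum>k\<le>K. cmod (conv f g k)) \<le> (\<Sum>k\<le>K. \<Sum>p\<in>maxpairs k. cmod (f (fst p)) * cmod (g (snd p)))"
      unfolding conv_def by (intro sum_mono order_trans[OF norm_sum]) (auto simp: case_prod_beta norm_mult)
    also have "\<dots> = (\<Sum>k\<le>K. cmod (f k)) * (\<Sum>k\<le>K. cmod (g k))"
      by (simp add: sum_group_sq sum_product sum.cartesian_product case_prod_beta)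
    also have "\<dots> \<le> l1norm f * l1norm g"
      using l1_ps_le[OF assms(1), of K] l1_ps_le[OF assms(2), of K]
      by (intro mult_mono) (auto simp: sum_nonneg l1norm_nonneg)
    finally show ?thesis .
  qed
  then show "conv f g \<in> l1" "l1norm (conv f g) \<le> l1norm f * l1norm g" using l1_bound by blast+
qed

lemma tens_l1T:
  assumes "f \<in> l1" "g \<in> l1"
  shows "tens f g \<in> l1T" "l1Tnorm (tens f g) \<le> l1norm f * l1norm g"
proof -
  have "(\<Sum>p\<in>{..K}\<times>{..K}. cmod (tens f g p)) \<le> l1norm f * l1norm g" for K
  proof -
    have "(\<Sum>p\<in>{..K}\<times>{..K}. cmod (tens f g p)) = (\<Sum>k\<le>K. cmod (f k)) * (\<Sum>k\<le>K. cmod (g k))"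
      by (simp add: tens_def sum_product sum.cartesian_product case_prod_beta norm_mult)
    also have "\<dots> \<le> l1norm f * l1norm g"
      using l1_ps_le[OF assms(1), of K] l1_ps_le[OF assms(2), of K]
      by (intro mult_mono) (auto simp: sum_nonneg l1norm_nonneg)
    finally show ?thesis .
  qed
  then show "tens f g \<in> l1T" "l1Tnorm (tens f g) \<le> l1norm f * l1norm g" using l1T_bound by blast+
qed

lemma ps_lim:
  assumes "f summable_on (UNIV::nat set)"
  shows "(\<lambda>K. ps f K) \<longlonglongrightarrow> infsum f UNIV"
proof -
  have "f sums infsum f UNIV" using assms by (intro has_sum_imp_sums has_sum_infsum)
  then have "(\<lambda>n. \<Sum>i<n. f i) \<longlonglongrightarrow> infsum f UNIV" by (simp add: sums_def)
  then have "(\<lambda>n. \<Sum>i<Suc n. f i) \<longlonglongrightarrow> infsum f UNIV" by (rule LIMSEQ_Suc)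
  then show ?thesis unfolding ps_def lessThan_Suc_atMost .
qed

lemma l1_summable: "f \<in> l1 \<Longrightarrow> f summable_on UNIV"
  unfolding l1_def by (rule abs_summable_summable) simp

lemma ch_add: "character \<phi> \<Longrightarrow> f \<in> l1 \<Longrightarrow> g \<in> l1 \<Longrightarrow> \<phi> (\<lambda>n. f n + g n) = \<phi> f + \<phi> g"
  unfolding character_def by blast
lemma ch_mult: "character \<phi> \<Longrightarrow> f \<in> l1 \<Longrightarrow> \<phi> (\<lambda>n. c * f n) = c * \<phi> f"
  unfolding character_def by blast
lemma ch_conv: "character \<phi> \<Longrightarrow> f \<in> l1 \<Longrightarrow> g \<in> l1 \<Longrightarrow> \<phi> (conv f g) = \<phi> f * \<phi> g"
  unfolding character_def by blast
lemma ch_diff: assumes "character \<phi>" "f \<in> l1" "g \<in> l1"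
  shows "\<phi> (\<lambda>n. f n - g n) = \<phi> f - \<phi> g"
proof -
  have "\<phi> (\<lambda>n. f n + (-1) * g n) = \<phi> f + \<phi> (\<lambda>n. (-1) * g n)"
    using assms by (intro ch_add l1_mult) auto
  also have "\<phi> (\<lambda>n. (-1) * g n) = - \<phi> g" using ch_mult[OF assms(1,3), of "-1"] by simp
  finally show ?thesis by simp
qed

lemma ch_unit: assumes "character \<phi>" shows "\<phi> (dl 0) = 1"
proof -
  obtain f where f: "f \<in> l1" "\<phi> f \<noteq> 0" using assms unfolding character_def by blast
  have "\<phi> f = \<phi> f * \<phi> (dl 0)" using ch_conv[OF assms f(1) dl_l1, of 0] conv_unit[of f] by simp
  then show ?thesis using f(2) by simp
qed

lemma ch_dl01: assumes "character \<phi>" shows "\<phi> (dl i) = 0 \<or> \<phi> (dl i) = 1"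
proof -
  have "\<phi> (dl i) = \<phi> (dl i) * \<phi> (dl i)" using ch_conv[OF assms dl_l1 dl_l1, of i i] conv_dl by simp
  then show ?thesis by (metis mult_cancel_left2 mult_eq_0_iff)
qed

definition rho :: "(nat \<Rightarrow> complex) \<Rightarrow> (nat \<Rightarrow> complex) \<Rightarrow> nat \<times> nat \<Rightarrow> complex" where
  "rho e x = tens (conv x e) (dl 0)"

lemma rho_bdd: assumes "e \<in> l1" shows "bdd_lin (rho e)"
  unfolding bdd_lin_def
proof (intro conjI ballI allI)
  fix f assume f: "f \<in> l1"
  show "rho e f \<in> l1T" unfolding rho_def by (intro tens_l1T conv_l1 f assms dl_l1)
next
  fix f g assume "f \<in> l1" "g \<in> l1"
  show "rho e (\<lambda>n. f n + g n) = (\<lambda>p. rho e f p + rho e g p)"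
    unfolding rho_def conv_add tens_def by (auto simp: ring_distribs)
next
  fix c f assume "f \<in> l1"
  show "rho e (\<lambda>n. c * f n) = (\<lambda>p. c * rho e f p)"
    unfolding rho_def conv_smult tens_def by (auto simp: ring_distribs)
next
  show "\<exists>C. \<forall>f\<in>l1. l1Tnorm (rho e f) \<le> C * l1norm f"
  proof (intro exI ballI)
    fix f assume f: "f \<in> l1"
    have "l1Tnorm (rho e f) \<le> l1norm (conv f e) * l1norm (dl 0)"
      unfolding rho_def by (intro tens_l1T conv_l1 f assms dl_l1)
    also have "\<dots> \<le> l1norm (conv f e) * 1"
      by (intro mult_left_mono dl_norm l1norm_nonneg)
    also have "\<dots> \<le> l1norm e * l1norm f" using conv_l1(2)[OF f assms] by (simp add: mult.commute)
    finally show "l1Tnorm (rho e f) \<le> l1norm e * l1norm f" .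
  qed
qed

lemma approx_from_means:
  assumes ch: "character \<phi>"
    and e: "\<And>N. e N \<in> l1" "\<And>N. \<phi> (e N) = 1"
    and lim: "\<And>a. a \<in> l1 \<Longrightarrow> (\<lambda>N. l1norm (\<lambda>k. conv a (e N) k - \<phi> a * e N k)) \<longlonglongrightarrow> 0"
  shows "approx_left_phi_biprojective \<phi>"
  unfolding approx_left_phi_biprojective_def
proof (intro exI conjI ballI)
  let ?F = "filtermap (\<lambda>N. rho (e N)) sequentially"
  show "?F \<noteq> bot" by (simp add: filtermap_bot_iff)
  show "eventually bdd_lin ?F" by (simp add: eventually_filtermap rho_bdd e)
  fix a x assume a: "a \<in> l1" and x: "x \<in> l1"
  have "lact a (rho (e N) x) p - rho (e N) (conv a x) p = 0" for N p
    unfolding rho_def lact_tens conv_assoc by simp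
  then show "((\<lambda>\<rho>. l1Tnorm (\<lambda>p. lact a (\<rho> x) p - \<rho> (conv a x) p)) \<longlongrightarrow> 0) ?F"
    by (simp add: filterlim_filtermap o_def l1Tnorm_def)
  have "\<phi> (piA (rho (e N) x)) - \<phi> x = 0" for N
    unfolding rho_def piA_tens conv_unit using ch_conv[OF ch x e(1)] e(2) by simp
  then show "((\<lambda>\<rho>. \<phi> (piA (\<rho> x)) - \<phi> x) \<longlongrightarrow> 0) ?F"
    by (simp add: filterlim_filtermap o_def)
  show "((\<lambda>\<rho>. l1Tnorm (\<lambda>p. \<rho> (conv x a) p - \<phi> a * \<rho> x p)) \<longlongrightarrow> 0) ?F"
    unfolding filterlim_filtermap o_def
  proof (rule tendsto_sandwich[of "\<lambda>_. 0" _ _ "\<lambda>N. l1norm x * l1norm (\<lambda>k. conv a (e N) k - \<phi> a * e N k)"])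
    show "\<forall>\<^sub>F N in sequentially. 0 \<le> l1Tnorm (\<lambda>p. rho (e N) (conv x a) p - \<phi> a * rho (e N) x p)"
      by (simp add: l1Tnorm_nonneg)
    show "((\<lambda>N. l1norm x * l1norm (\<lambda>k. conv a (e N) k - \<phi> a * e N k)) \<longlongrightarrow> 0) sequentially"
      using tendsto_mult_right_zero[OF lim[OF a]] .
    show "\<forall>\<^sub>F N in sequentially. l1Tnorm (\<lambda>p. rho (e N) (conv x a) p - \<phi> a * rho (e N) x p)
       \<le> l1norm x * l1norm (\<lambda>k. conv a (e N) k - \<phi> a * e N k)"
    proof (rule always_eventually, rule allI)
      fix N
      define D where "D = (\<lambda>k. conv a (e N) k - \<phi> a * e N k)"
      have D: "D \<in> l1" unfolding D_def by (intro l1_diff l1_mult conv_l1 a e)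
      have eq: "(\<lambda>p. rho (e N) (conv x a) p - \<phi> a * rho (e N) x p) = tens (conv x D) (dl 0)"
      proof -
        have "conv x D = (\<lambda>k. conv (conv x a) (e N) k - \<phi> a * conv x (e N) k)"
          by (rule ps_inj) (simp add: D_def ps_conv ps_diff ps_mult algebra_simps)
        then show ?thesis unfolding rho_def tens_def by (auto simp: algebra_simps)
      qed
      have "l1Tnorm (tens (conv x D) (dl 0)) \<le> l1norm (conv x D) * l1norm (dl 0)"
        by (intro tens_l1T conv_l1 x D dl_l1)
      also have "\<dots> \<le> l1norm (conv x D) * 1"
        by (intro mult_left_mono dl_norm l1norm_nonneg)
      also have "\<dots> \<le> l1norm x * l1norm D" using conv_l1(2)[OF x D] by simp
      finally show "l1Tnorm (\<lambda>p. rho (e N) (conv x a) p - \<phi> a * rho (e N) x p)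
         \<le> l1norm x * l1norm (\<lambda>k. conv a (e N) k - \<phi> a * e N k)"
        unfolding eq D_def .
    qed
  qed simp
qed

lemma caseB:
  assumes ch: "character \<phi>" and h1: "\<phi> (dl m) = 1" and h0: "\<phi> (dl (Suc m)) = 0"
  shows "approx_left_phi_biprojective \<phi>"
proof -
  define e where "e = (\<lambda>k. dl m k - dl (Suc m) k)"
  have el1: "e \<in> l1" unfolding e_def by (intro l1_diff dl_l1)
  have pe: "\<phi> e = 1" unfolding e_def using ch_diff[OF ch dl_l1 dl_l1] h1 h0 by simp
  have ce: "conv a e = (\<lambda>k. ps a m * e k)" for a
    apply (rule ps_inj)
    apply (simp add: ps_conv ps_mult e_def ps_diff ps_dl)
    by (metis le_antisym not_less_eq_eq)
  have pa: "\<phi> a = ps a m" if "a \<in> l1" for a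
  proof -
    have "\<phi> (conv a e) = \<phi> a" using ch_conv[OF ch that el1] pe by simp
    moreover have "\<phi> (conv a e) = ps a m" unfolding ce using ch_mult[OF ch el1] pe by simp
    ultimately show ?thesis by simp
  qed
  show ?thesis
  proof (rule approx_from_means[OF ch, of "\<lambda>N. e"])
    fix a :: "nat \<Rightarrow> complex" assume a: "a \<in> l1"
    have "(\<lambda>k. conv a e k - \<phi> a * e k) = (\<lambda>k. 0)" unfolding ce pa[OF a] by simp
    then show "(\<lambda>N. l1norm (\<lambda>k. conv a e k - \<phi> a * e k)) \<longlonglongrightarrow> 0"
      by (simp add: l1norm_def)
  qed (use el1 pe in auto)
qed

lemma inverse_l1:
  assumes x: "x \<in> l1" and eps: "0 < \<epsilon>" and bd: "\<And>K. \<epsilon> \<le> cmod (ps x K)"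
  shows "\<exists>z\<in>l1. conv x z = dl 0"
proof -
  have nz: "ps x K \<noteq> 0" for K using bd[of K] eps by auto
  define z where "z = (\<lambda>k. 1 / ps x k - (if k = 0 then 0 else 1 / ps x (k - 1)))"
  have pz: "ps z K = 1 / ps x K" for K
  proof (induction K)
    case 0 then show ?case by (simp add: ps_def z_def)
  next
    case (Suc K)
    have "ps z (Suc K) = ps z K + z (Suc K)" by (simp add: ps_def)
    then show ?case using Suc by (simp add: z_def)
  qed
  have xk: "x k = ps x k - (if k = 0 then 0 else ps x (k - 1))" for k
    by (cases k) (simp_all add: ps_def)
  have zb: "cmod (z k) \<le> cmod (x k) / \<epsilon>^2" for k
  proof (cases k)
    case 0
    have x0: "x 0 = ps x 0" by (simp add: ps_def)
    have e0: "\<epsilon> \<le> cmod (x 0)" using bd[of 0] x0 by simp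
    have "cmod (z k) = 1 / cmod (x 0)" using 0 x0 by (simp add: z_def norm_divide)
    also have "\<dots> \<le> cmod (x 0) / \<epsilon>^2"
    proof -
      have p: "0 < cmod (x 0)" using e0 eps by linarith
      have "\<epsilon> * \<epsilon> \<le> cmod (x 0) * cmod (x 0)" using e0 eps by (intro mult_mono) auto
      then show ?thesis using p eps by (simp add: field_simps power2_eq_square)
    qed
    finally show ?thesis using 0 by simp
  next
    case (Suc m)
    have xs: "x k = ps x k - ps x m" using Suc by (simp add: ps_def)
    have zk: "z k = - x k / (ps x k * ps x m)"
      using nz[of k] nz[of m] Suc unfolding z_def xs by (simp add: field_simps)
    have "cmod (z k) = cmod (x k) / (cmod (ps x k) * cmod (ps x m))"
      unfolding zk by (simp add: norm_mult norm_divide)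
    also have "\<dots> \<le> cmod (x k) / (\<epsilon> * \<epsilon>)"
      using eps bd[of k] bd[of m] by (intro divide_left_mono mult_mono mult_pos_pos) auto
    finally show ?thesis by (simp add: power2_eq_square)
  qed
  have "z \<in> l1"
  proof (rule l1_bound(1))
    fix K
    have "(\<Sum>k\<le>K. cmod (z k)) \<le> (\<Sum>k\<le>K. cmod (x k) / \<epsilon>^2)"
      by (intro sum_mono zb)
    also have "\<dots> = (\<Sum>k\<le>K. cmod (x k)) / \<epsilon>^2" by (simp add: sum_divide_distrib)
    also have "\<dots> \<le> l1norm x / \<epsilon>^2"
      using l1_ps_le[OF x] eps by (intro divide_right_mono) auto
    finally show "(\<Sum>k\<le>K. cmod (z k)) \<le> l1norm x / \<epsilon>^2" .
  qed
  moreover have "conv x z = dl 0"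
    by (rule ps_inj) (simp add: ps_conv pz ps_dl nz)
  ultimately show ?thesis by blast
qed

lemma caseA_value:
  assumes ch: "character \<phi>" and all1: "\<And>i. \<phi> (dl i) = 1" and c: "c \<in> l1"
  shows "\<phi> c = infsum c UNIV"
proof (rule ccontr)
  define lam where "lam = \<phi> c"
  define L where "L = infsum c UNIV"
  assume "\<phi> c \<noteq> infsum c UNIV"
  then have ne: "lam \<noteq> L" unfolding lam_def L_def .
  define r where "r = cmod (L - lam) / 2"
  have r: "0 < r" using ne unfolding r_def by simp
  obtain N where N: "\<And>K. K \<ge> N \<Longrightarrow> cmod (ps c K - L) < r"
    using ps_lim[OF l1_summable[OF c]] r unfolding LIMSEQ_iff L_def by blast
  define x1 where "x1 = (\<lambda>k. conv c (dl N) k - lam * dl N k)"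
  define x2 where "x2 = (\<lambda>k. x1 k + dl 0 k)"
  define x where "x = (\<lambda>k. x2 k - dl N k)"
  have x1l: "x1 \<in> l1" unfolding x1_def by (intro l1_diff l1_mult conv_l1 c dl_l1)
  have x2l: "x2 \<in> l1" unfolding x2_def by (intro l1_add x1l dl_l1)
  have xl: "x \<in> l1" unfolding x_def by (intro l1_diff x2l dl_l1)
  have "\<phi> x1 = 0" unfolding x1_def
    using ch_diff[OF ch conv_l1(1)[OF c dl_l1] l1_mult[OF dl_l1]] ch_conv[OF ch c dl_l1]
      ch_mult[OF ch dl_l1] all1 lam_def by simp
  then have "\<phi> x2 = 1" unfolding x2_def using ch_add[OF ch x1l dl_l1] all1 by simp
  then have px: "\<phi> x = 0" unfolding x_def using ch_diff[OF ch x2l dl_l1] all1 by simp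
  have psx: "ps x K = (if K < N then 1 else ps c K - lam)" for K
    unfolding x_def x2_def x1_def by (simp add: ps_diff ps_add ps_mult ps_conv ps_dl)
  have bd: "min 1 r \<le> cmod (ps x K)" for K
  proof (cases "K < N")
    case True then show ?thesis by (simp add: psx)
  next
    case False
    have "cmod (L - lam) \<le> cmod (ps c K - lam) + cmod (ps c K - L)"
    proof -
      have "L - lam = (ps c K - lam) - (ps c K - L)" by simp
      then show ?thesis using norm_triangle_ineq4[of "ps c K - lam" "ps c K - L"] by simp
    qed
    then have "r \<le> cmod (ps c K - lam)" using N[of K] False unfolding r_def by auto
    then show ?thesis using False by (simp add: psx)
  qed
  obtain z where z: "z \<in> l1" "conv x z = dl 0"
    using inverse_l1[OF xl _ bd] r by auto
  have "\<phi> (conv x z) = 0" using ch_conv[OF ch xl z(1)] px by simp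
  then show False using z(2) ch_unit[OF ch] by simp
qed

lemma dl_apply: "dl i n = (if n = i then 1 else 0)" by (simp add: dl_def)

lemma conv_dl_right: "conv a (dl N) k = (if k < N then 0 else if k = N then ps a N else a k)"
proof -
  have "conv a (dl N) k = (\<Sum>j\<le>k. a k * dl N j) + (\<Sum>i<k. a i * dl N k)"
    unfolding conv_def by (subst sum_maxpairs) (simp add: case_prod_beta)
  also have "\<dots> = a k * ps (dl N) k + (\<Sum>i<k. a i) * dl N k"
    by (simp add: ps_def sum_distrib_left sum_distrib_right)
  also have "\<dots> = (if k < N then 0 else if k = N then ps a N else a k)"
    by (cases "N = k") (auto simp: ps_dl dl_def ps_def lessThan_Suc_atMost[symmetric] ps_def)
  finally show ?thesis .
qed

lemma tail_bound:
  assumes a: "a \<in> l1"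
  shows "(\<Sum>k\<le>K. if N < k then cmod (a k) else 0) \<le> l1norm a - (\<Sum>k\<le>N. cmod (a k))"
proof -
  define M where "M = K + N"
  have "(\<Sum>k\<le>K. if N < k then cmod (a k) else 0) \<le> (\<Sum>k\<le>M. if N < k then cmod (a k) else 0)"
    by (rule sum_mono2) (auto simp: M_def)
  moreover have "(\<Sum>k\<le>M. cmod (a k)) = (\<Sum>k\<le>M. if N < k then cmod (a k) else 0) + (\<Sum>k\<le>M. if N < k then 0 else cmod (a k))"
    by (simp add: sum.distrib[symmetric] if_distrib) (rule sum.cong, auto)
  moreover have "(\<Sum>k\<le>M. if N < k then 0 else cmod (a k)) = (\<Sum>k\<le>N. cmod (a k))"
    by (rule sum.mono_neutral_cong_right) (auto simp: M_def)
  moreover have "(\<Sum>k\<le>M. cmod (a k)) \<le> l1norm a" by (rule l1_ps_le[OF a])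
  ultimately show ?thesis by linarith
qed

lemma caseA:
  assumes ch: "character \<phi>" and all1: "\<And>i. \<phi> (dl i) = 1"
  shows "approx_left_phi_biprojective \<phi>"
proof (rule approx_from_means[OF ch, of dl])
  fix a :: "nat \<Rightarrow> complex" assume a: "a \<in> l1"
  define L where "L = infsum a UNIV"
  have pa: "\<phi> a = L" unfolding L_def by (rule caseA_value[OF ch all1 a])
  define B where "B = (\<lambda>N. cmod (ps a N - L) + (l1norm a - (\<Sum>k\<le>N. cmod (a k))))"
  have le: "l1norm (\<lambda>k. conv a (dl N) k - \<phi> a * dl N k) \<le> B N" for N
  proof (rule l1_bound(2))
    fix K
    have "(\<Sum>k\<le>K. cmod (conv a (dl N) k - \<phi> a * dl N k))
       = (\<Sum>k\<le>K. (if k = N then cmod (ps a N - L) else 0) + (if N < k then cmod (a k) else 0))"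
      by (rule sum.cong) (auto simp: conv_dl_right pa dl_apply)
    also have "\<dots> = (\<Sum>k\<le>K. if k = N then cmod (ps a N - L) else 0) + (\<Sum>k\<le>K. if N < k then cmod (a k) else 0)"
      by (simp add: sum.distrib)
    finally have eq: "(\<Sum>k\<le>K. cmod (conv a (dl N) k - \<phi> a * dl N k)) = (\<Sum>k\<le>K. if k = N then cmod (ps a N - L) else 0) + (\<Sum>k\<le>K. if N < k then cmod (a k) else 0)" .
    have "(\<Sum>k\<le>K. if k = N then cmod (ps a N - L) else 0) \<le> cmod (ps a N - L)"
      by (simp add: sum.delta)
    then show "(\<Sum>k\<le>K. cmod (conv a (dl N) k - \<phi> a * dl N k)) \<le> B N"
      using tail_bound[OF a, of N K] eq unfolding B_def by linarith
  qed
  have "B \<longlonglongrightarrow> 0 + (l1norm a - l1norm a)"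
    unfolding B_def
  proof (intro tendsto_add tendsto_diff tendsto_const)
    have "(\<lambda>N. ps a N - L) \<longlonglongrightarrow> 0"
      using ps_lim[OF l1_summable[OF a]] unfolding L_def by (rule LIM_zero)
    then show "(\<lambda>N. cmod (ps a N - L)) \<longlonglongrightarrow> 0" by (rule tendsto_norm_zero)
    have "(\<lambda>K. ps (\<lambda>n. cmod (a n)) K) \<longlonglongrightarrow> infsum (\<lambda>n. cmod (a n)) UNIV"
      by (rule ps_lim) (use a in \<open>simp add: l1_def\<close>)
    then show "(\<lambda>N. \<Sum>k\<le>N. cmod (a k)) \<longlonglongrightarrow> l1norm a" unfolding ps_def l1norm_def .
  qed
  then have B0: "B \<longlonglongrightarrow> 0" by simp
  show "(\<lambda>N. l1norm (\<lambda>k. conv a (dl N) k - \<phi> a * dl N k)) \<longlonglongrightarrow> 0"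
    by (rule tendsto_sandwich[OF _ _ tendsto_const B0]) (auto simp: le l1norm_nonneg)
qed (use dl_l1 all1 in auto)

lemma all_chars: "character \<phi> \<Longrightarrow> approx_left_phi_biprojective \<phi>"
proof (cases "\<forall>i. \<phi> (dl i) = 1")
  case True
  assume ch: "character \<phi>"
  then show ?thesis using caseA True by blast
next
  case False
  assume ch: "character \<phi>"
  then have ex: "\<exists>i. \<phi> (dl i) = 0" using False ch_dl01 by blast
  define n where "n = (LEAST i. \<phi> (dl i) = 0)"
  have n0: "\<phi> (dl n) = 0" unfolding n_def using LeastI_ex[OF ex] .
  have "n \<noteq> 0"
  proof
    assume "n = 0" then show False using n0 ch_unit[OF ch] by simp
  qed
  then obtain m where m: "n = Suc m" by (cases n) auto
  have "\<phi> (dl m) \<noteq> 0" using not_less_Least[of m "\<lambda>i. \<phi> (dl i) = 0"] m n_def by auto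
  then have "\<phi> (dl m) = 1" using ch_dl01[OF ch] by blast
  then show ?thesis using caseB[OF ch] n0 m by blast
qed

lemma phiNone: "phi None f = infsum f UNIV" by (simp add: phi_def)

lemma infsum_dl0: "infsum (dl 0) UNIV = 1"
proof -
  have "(\<lambda>K. ps (dl 0) K) \<longlonglongrightarrow> infsum (dl 0) UNIV" by (rule ps_lim[OF l1_summable[OF dl_l1]])
  moreover have "(\<lambda>K. ps (dl 0) K) \<longlonglongrightarrow> 1" by (simp add: ps_dl)
  ultimately show ?thesis by (rule LIMSEQ_unique)
qed

lemma character_phiNone: "character (phi None)"
  unfolding character_def phiNone
proof (intro conjI ballI allI)
  fix f g :: "nat \<Rightarrow> complex" assume f: "f \<in> l1" and g: "g \<in> l1"
  show "infsum (\<lambda>n. f n + g n) UNIV = infsum f UNIV + infsum g UNIV"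
    by (rule infsum_add) (use f g l1_summable in auto)
  have "(\<lambda>K. ps (conv f g) K) \<longlonglongrightarrow> infsum (conv f g) UNIV"
    by (rule ps_lim[OF l1_summable[OF conv_l1(1)[OF f g]]])
  moreover have "(\<lambda>K. ps (conv f g) K) \<longlonglongrightarrow> infsum f UNIV * infsum g UNIV"
    unfolding ps_conv by (intro tendsto_mult ps_lim l1_summable f g)
  ultimately show "infsum (conv f g) UNIV = infsum f UNIV * infsum g UNIV" by (rule LIMSEQ_unique)
next
  fix c :: complex and f :: "nat \<Rightarrow> complex"
  show "infsum (\<lambda>n. c * f n) UNIV = c * infsum f UNIV" by (rule infsum_cmult_right')
next
  show "\<exists>f\<in>l1. infsum f UNIV \<noteq> 0" by (rule bexI[of _ "dl 0"]) (simp_all add: dl_l1 infsum_dl0)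
qed

lemma not_biproj: "\<not> phi_biprojective (phi None)"
proof
  assume "phi_biprojective (phi None)"
  then obtain \<rho> where bl: "bdd_lin \<rho>"
    and bim: "\<And>a x. a \<in> l1 \<Longrightarrow> x \<in> l1 \<Longrightarrow> \<rho> (conv a x) = lact a (\<rho> x) \<and> \<rho> (conv x a) = ract (\<rho> x) a"
    and pr: "\<And>a. a \<in> l1 \<Longrightarrow> phi None (piA (\<rho> a)) = phi None a"
    unfolding phi_biprojective_def by blast
  define G where "G = \<rho> (dl 0)"
  have GT: "G \<in> l1T" using bl dl_l1 unfolding bdd_lin_def G_def by blast
  have comm: "lact (dl j) G = ract G (dl j)" for j
  proof -
    have "\<rho> (conv (dl j) (dl 0)) = lact (dl j) G" using bim[OF dl_l1 dl_l1] G_def by blast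
    moreover have "\<rho> (conv (dl 0) (dl j)) = ract G (dl j)" using bim[OF dl_l1 dl_l1] G_def by blast
    ultimately show ?thesis by (simp add: conv_dl)
  qed
  have col: "(\<Sum>i\<le>j. G (i, l)) = 0" if "l < j" for l j
  proof -
    have "lact (dl j) G (j, l) = (\<Sum>i\<le>j. G (i, l))"
      unfolding lact_def by (simp add: sum_maxpairs dl_apply)
    moreover have "ract G (dl j) (j, l) = 0"
      unfolding ract_def using that by (simp add: sum_maxpairs dl_apply)
    ultimately show ?thesis using comm[of j] by simp
  qed
  have sq: "(\<Sum>p\<in>{..K}\<times>{..K}. G p) = (\<Sum>i\<le>K. G (i, K))" for K
  proof -
    have "(\<Sum>p\<in>{..K}\<times>{..K}. G p) = (\<Sum>i\<le>K. \<Sum>l\<le>K. G (i, l))"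
      by (simp add: sum.cartesian_product)
    also have "\<dots> = (\<Sum>l\<le>K. \<Sum>i\<le>K. G (i, l))" by (rule sum.swap)
    also have "\<dots> = (\<Sum>l\<le>K. if l = K then (\<Sum>i\<le>K. G (i, K)) else 0)"
      by (rule sum.cong) (auto simp: col)
    finally show ?thesis by (simp add: sum.delta)
  qed
  define s where "s = (\<lambda>K. \<Sum>p\<in>{..K}\<times>{..K}. cmod (G p))"
  have smono: "incseq s" unfolding s_def
    by (rule incseq_SucI, rule sum_mono2) auto
  have sbd: "s K \<le> l1Tnorm G" for K unfolding s_def l1Tnorm_def
    by (rule finite_sum_le_infsum) (use GT in \<open>auto simp: l1T_def\<close>)
  obtain l where sl: "s \<longlonglongrightarrow> l"
    using smono sbd by (meson incseq_convergent)
  have dif: "(\<lambda>K. s (Suc K) - s K) \<longlonglongrightarrow> 0"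
    using tendsto_diff[OF LIMSEQ_Suc[OF sl] sl] by simp
  have colb: "(\<Sum>i\<le>Suc K. cmod (G (i, Suc K))) \<le> s (Suc K) - s K" for K
  proof -
    have d: "{..K}\<times>{..K} \<inter> (\<lambda>i. (i, Suc K)) ` {..Suc K} = {}" by auto
    have "s K + (\<Sum>i\<le>Suc K. cmod (G (i, Suc K))) = (\<Sum>p\<in>{..K}\<times>{..K} \<union> (\<lambda>i. (i, Suc K)) ` {..Suc K}. cmod (G p))"
      unfolding s_def by (subst sum.union_disjoint) (auto simp: sum.reindex inj_on_def)
    also have "\<dots> \<le> s (Suc K)" unfolding s_def by (rule sum_mono2) auto
    finally show ?thesis by simp
  qed
  have psq: "ps (piA G) K = (\<Sum>i\<le>K. G (i, K))" for K
    unfolding ps_def piA_def by (simp add: case_prod_beta sum_group_sq sq)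
  have "(\<lambda>K. ps (piA G) (Suc K)) \<longlonglongrightarrow> 0"
  proof (rule Lim_null_comparison[OF _ dif])
    show "\<forall>\<^sub>F K in sequentially. norm (ps (piA G) (Suc K)) \<le> s (Suc K) - s K"
    proof (rule always_eventually, rule allI)
      fix K
      have "norm (ps (piA G) (Suc K)) \<le> (\<Sum>i\<le>Suc K. cmod (G (i, Suc K)))"
        unfolding psq by (rule norm_sum)
      then show "norm (ps (piA G) (Suc K)) \<le> s (Suc K) - s K" using colb[of K] by linarith
    qed
  qed
  then have p0: "(\<lambda>K. ps (piA G) K) \<longlonglongrightarrow> 0" by (rule LIMSEQ_imp_Suc)
  have "phi None (piA G) = 0"
  proof (cases "piA G summable_on UNIV")
    case True
    then show ?thesis unfolding phiNone using LIMSEQ_unique[OF ps_lim[OF True] p0] by simp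
  next
    case False then show ?thesis unfolding phiNone by (simp add: infsum_not_exists)
  qed
  moreover have "phi None (piA G) = 1" using pr[OF dl_l1] infsum_dl0 unfolding G_def phiNone by simp
  ultimately show False by simp
qed

theorem mainTheorem18:
  shows "approx_left_character_biprojective \<and>
         approx_left_phi_biprojective (phi None) \<and>
         \<not> phi_biprojective (phi None)"
  using all_chars character_phiNone not_biproj
  unfolding approx_left_character_biprojective_def by blast

end
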